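(* Let $f(x,\theta)$ be a model, differentiable in its parameters $\theta\in\mathbb{R}^d$, let $\mathcal{L}(\hat y,y)$ be a loss function, and let $\kappa>0$. Let $\operatorname{Clip}_\kappa:\mathbb{R}^d\to\mathbb{R}^d$ clamp each entry of its input to $[-\kappa,\kappa]$ (leaving entries in that range unchanged). Let $\boldsymbol{\theta^{(t-1)}}=[\theta^L,\theta^U]\subseteq\mathbb{R}^d$ be an interval parameter domain, let $\mathcal{B}^{(t)}=\{(x^{(i)},y^{(i)})\}_{i=1}^b$ be a nominal batch of size $b$, and let $n$ be an integer with $0\le n\le b$. For each $i$, let $\delta_L^{(t,i)},\delta_U^{(t,i)}\in\mathbb{R}^d$ satisfy, element-wise, $$\delta_L^{(t,i)}\le \operatorname{Clip}_\kappa\Big[\nabla_\theta\mathcal{L}\big(f(x^{(i)},\theta'),y^{(i)}\big)\Big]\le\delta_U^{(t,i)}\quad\text{for all }\theta'\in\boldsymbol{\theta^{(t-1)}}.$$ Then for every $\theta^{(t-1)}\in\boldsymbol{\theta^{(t-1)}}$ and every perturbed batch $\tilde{\mathcal{B}}^{(t)}$ obtained from $\mathcal{B}^{(t)}$ by removing up to $n$ data points and adding up to $n$ arbitrary data points, the clipped descent direction $$\Delta\theta^{(t)}=\frac{1}{|\tilde{\mathcal{B}}^{(t)}|}\sum_{(x,y)\in\tilde{\mathcal{B}}^{(t)}}\operatorname{Clip}_\kappa\Big[\nabla_\theta\mathcal{L}\big(f(x,\theta^{(t-1)}),y\big)\Big]$$ satisfies, element-wise, $\Delta\theta_L^{(t)}\le\Delta\theta^{(t)}\le\Delta\theta_U^{(t)}$,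 where $$\Delta\theta_L^{(t)}=\frac1b\Big(\operatorname{SEMin}_{b-n}\{\delta_L^{(t,i)}\}_{i=1}^b-n\kappa\mathbf{1}\Big),\qquad \Delta\theta_U^{(t)}=\frac1b\Big(\operatorname{SEMax}_{b-n}\{\delta_U^{(t,i)}\}_{i=1}^b+n\kappa\mathbf{1}\Big),$$ and $\mathbf 1\in\mathbb{R}^d$ is the all-ones vector.
   Context: An interval domain $[\theta^L,\theta^U]\subseteq\mathbb{R}^d$ is the set of $\theta$ with $\theta^L_j\le\theta_j\le\theta^U_j$ for all $j$. For vectors $\{v^{(i)}\}_{i=1}^b\subseteq\mathbb{R}^d$ and an integer $a\le b$, $\operatorname{SEMax}_a\{v^{(i)}\}$ is the vector whose $j$-th entry is the sum of the $a$ largest values among $v^{(1)}_j,\dots,v^{(b)}_j$, and $\operatorname{SEMin}_a\{v^{(i)}\}$ is the vector whose $j$-th entry is the sum of the $a$ smallest values among them (computed independently at each index $j$). *)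

theory Defs
  imports "HOL-Analysis.Analysis" "HOL-Library.Multiset"
begin

definition interval_dom :: "real^'d \<Rightarrow> real^'d \<Rightarrow> (real^'d) set" where
  "interval_dom thL thU = {th. \<forall>j. thL$j \<le> th$j \<and> th$j \<le> thU$j}"

definition Clip :: "real \<Rightarrow> real^'d \<Rightarrow> real^'d" where
  "Clip k v = (\<chi> j. max (- k) (min k (v$j)))"

definition grad :: "(real^'d \<Rightarrow> real) \<Rightarrow> real^'d \<Rightarrow> real^'d" where
  "grad h th = (\<chi> j. frechet_derivative h (at th) (axis j 1))"

definition SEMax :: "nat \<Rightarrow> nat \<Rightarrow> (nat \<Rightarrow> real^'d) \<Rightarrow> real^'d" where
  "SEMax a b v = (\<chi> j. sum_list (take a (rev (sort (map (\<lambda>i. v i $ j) [0..<b])))))"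

definition SEMin :: "nat \<Rightarrow> nat \<Rightarrow> (nat \<Rightarrow> real^'d) \<Rightarrow> real^'d" where
  "SEMin a b v = (\<chi> j. sum_list (take a (sort (map (\<lambda>i. v i $ j) [0..<b]))))"

end

theory Submission imports Defs "HOL-Combinatorics.List_Permutation"
begin

lemma sum_le_card_sep:
  fixes f :: "nat \<Rightarrow> real"
  assumes "finite A" "finite B" "card A = card B" "\<forall>a\<in>A. \<forall>b\<in>B. f a \<le> f b"
  shows "sum f A \<le> sum f B"
proof (cases "A = {}")
  case True then show ?thesis using assms by simp
next
  case False
  define t where "t = Max (f ` A)"
  have "sum f A \<le> of_nat (card A) * t"
    using sum_bounded_above[of A f t] assms(1) False by (simp add: t_def)
  also have "\<dots> \<le> sum f B"
  proof -
    have "t \<in> f ` A" using False assms(1) unfolding t_def by (intro Max_in) auto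
    then have "\<forall>b\<in>B. t \<le> f b" using assms(4) by auto
    then show ?thesis using sum_bounded_below[of B t f] assms(3) by simp
  qed
  finally show ?thesis .
qed

lemma sorted_desc_top:
  fixes ys :: "real list"
  assumes "sorted_wrt (\<ge>) ys" "I \<subseteq> {..<length ys}" "card I = k"
  shows "(\<Sum>i\<in>I. ys!i) \<le> (\<Sum>i<k. ys!i)"
proof -
  have fI: "finite I" using assms(2) finite_subset by blast
  have kle: "k \<le> length ys" using assms(2,3) by (metis card_lessThan card_mono finite_lessThan)
  have cd: "card (I - {..<k}) = card ({..<k} - I)"
  proof -
    have "card (I - {..<k}) = k - card (I \<inter> {..<k})"
      using card_Diff_subset_Int[of I "{..<k}"] fI assms(3)
      by (simp add: card_Diff_subset_Int)
    also have "\<dots> = card ({..<k} - I)"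
      by (metis card_Diff_subset_Int card_lessThan finite_lessThan Int_commute finite_Int)
    finally show ?thesis .
  qed
  have sep: "\<forall>a\<in>I - {..<k}. \<forall>b\<in>{..<k} - I. ys!a \<le> ys!b"
  proof (intro ballI)
    fix a b assume a: "a \<in> I - {..<k}" and b: "b \<in> {..<k} - I"
    then have "b < a" "a < length ys" using assms(2) by auto
    then show "ys!a \<le> ys!b" using assms(1) by (simp add: sorted_wrt_iff_nth_less)
  qed
  have "(\<Sum>i\<in>I. ys!i) = (\<Sum>i\<in>I \<inter> {..<k}. ys!i) + (\<Sum>i\<in>I - {..<k}. ys!i)"
    using fI by (metis sum.Int_Diff)
  also have "\<dots> \<le> (\<Sum>i\<in>I \<inter> {..<k}. ys!i) + (\<Sum>i\<in>{..<k} - I. ys!i)"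
    using sum_le_card_sep[OF _ _ cd sep] fI by simp
  also have "\<dots> = (\<Sum>i<k. ys!i)"
    by (metis Int_commute finite_lessThan sum.Int_Diff)
  finally show ?thesis .
qed

lemma topk_le:
  fixes xs :: "real list"
  assumes "I \<subseteq> {..<length xs}" "card I = k"
  shows "(\<Sum>i\<in>I. xs!i) \<le> sum_list (take k (rev (sort xs)))"
proof -
  define ys where "ys = rev (sort xs)"
  have "mset xs = mset ys" by (simp add: ys_def)
  then obtain p where p: "bij_betw p {..<length xs} {..<length ys}" "\<forall>i<length xs. xs ! i = ys ! (p i)"
    using permutation_Ex_bij by blast
  have len: "length ys = length xs" by (simp add: ys_def)
  have inj: "inj_on p I" using p(1) assms(1) bij_betw_imp_inj_on inj_on_subset by blast
  have "(\<Sum>i\<in>I. xs!i) = (\<Sum>i\<in>I. ys!(p i))" using p(2) assms(1) by (intro sum.cong) auto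
  also have "\<dots> = (\<Sum>i\<in>p ` I. ys!i)" using sum.reindex[OF inj, of "\<lambda>i. ys!i"] by simp
  also have "\<dots> \<le> (\<Sum>i<k. ys!i)"
  proof (rule sorted_desc_top)
    show "sorted_wrt (\<ge>) ys" by (simp add: ys_def sorted_wrt_rev)
    show "p ` I \<subseteq> {..<length ys}" using p(1) assms(1) bij_betw_imp_surj_on by blast
    show "card (p ` I) = k" using card_image[OF inj] assms(2) by simp
  qed
  also have "\<dots> = sum_list (take k ys)"
  proof -
    have kle: "k \<le> length ys" using assms len by (metis card_lessThan card_mono finite_lessThan)
    show ?thesis by (simp add: sum_list_sum_nth min_absorb2 kle atLeast0LessThan)
  qed
  finally show ?thesis by (simp add: ys_def)
qed

lemma botk_ge:
  fixes xs :: "real list"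
  assumes "I \<subseteq> {..<length xs}" "card I = k"
  shows "sum_list (take k (sort xs)) \<le> (\<Sum>i\<in>I. xs!i)"
proof -
  define ys where "ys = sort xs"
  have "mset xs = mset ys" by (simp add: ys_def)
  then obtain p where p: "bij_betw p {..<length xs} {..<length ys}" "\<forall>i<length xs. xs ! i = ys ! (p i)"
    using permutation_Ex_bij by blast
  have len: "length ys = length xs" by (simp add: ys_def)
  have inj: "inj_on p I" using p(1) assms(1) bij_betw_imp_inj_on inj_on_subset by blast
  have pl: "p i < length ys" if "i \<in> I" for i
  proof -
    have "i \<in> {..<length xs}" using assms(1) that by blast
    then show ?thesis using bij_betw_apply[OF p(1)] by auto
  qed
  have "(\<Sum>i\<in>I. - xs!i) = (\<Sum>i\<in>I. (map uminus ys)!(p i))" using p(2) assms(1) pl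
    by (intro sum.cong) auto
  also have "\<dots> = (\<Sum>i\<in>p ` I. (map uminus ys)!i)" using sum.reindex[OF inj, of "\<lambda>i. (map uminus ys)!i"] by simp
  also have "\<dots> \<le> (\<Sum>i<k. (map uminus ys)!i)"
  proof (rule sorted_desc_top)
    show "sorted_wrt (\<ge>) (map uminus ys)" by (simp add: ys_def sorted_wrt_map)
    show "p ` I \<subseteq> {..<length (map uminus ys)}" using p(1) assms(1) bij_betw_imp_surj_on by fastforce
    show "card (p ` I) = k" using card_image[OF inj] assms(2) by simp
  qed
  also have "\<dots> = - sum_list (take k ys)"
  proof -
    have kle: "k \<le> length ys" using assms len by (metis card_lessThan card_mono finite_lessThan)
    have "(\<Sum>i<k. (map uminus ys)!i) = (\<Sum>i<k. - (ys!i))"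
      using kle by (intro sum.cong) auto
    then show ?thesis by (simp add: sum_list_sum_nth min_absorb2 kle sum_negf atLeast0LessThan)
  qed
  finally show ?thesis by (simp add: ys_def sum_negf)
qed

lemma submset_indices:
  "K \<subseteq># mset xs \<Longrightarrow> \<exists>J \<subseteq> {..<length xs}. image_mset (\<lambda>i. xs!i) (mset_set J) = K"
proof (induction xs arbitrary: K)
  case Nil then show ?case by auto
next
  case (Cons x xs)
  have sh: "image_mset (\<lambda>i. (x#xs)!i) (mset_set (Suc ` J')) = image_mset (\<lambda>i. xs!i) (mset_set J')"
    if "finite J'" for J'
  proof -
    have "mset_set (Suc ` J') = image_mset Suc (mset_set J')"
      using image_mset_mset_set[of Suc J'] by simp
    then show ?thesis by (simp add: multiset.map_comp comp_def)
  qed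
  show ?case
  proof (cases "x \<in># K")
    case True
    have "K - {#x#} \<subseteq># mset xs" using Cons.prems True
      by (metis True Cons.prems mset.simps(2) add_mset_remove_trivial insert_DiffM insert_subset_eq_iff)
    then obtain J' where J': "J' \<subseteq> {..<length xs}" "image_mset (\<lambda>i. xs!i) (mset_set J') = K - {#x#}"
      using Cons.IH by blast
    have fJ: "finite J'" using J'(1) finite_subset by blast
    have "mset_set (insert 0 (Suc ` J')) = add_mset 0 (mset_set (Suc ` J'))"
      using fJ by (subst mset_set.insert) auto
    then have "image_mset (\<lambda>i. (x#xs)!i) (mset_set (insert 0 (Suc ` J'))) = K"
      using sh[OF fJ] J'(2) True by simp
    moreover have "insert 0 (Suc ` J') \<subseteq> {..<length (x#xs)}" using J'(1) by auto
    ultimately show ?thesis by blast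
  next
    case False
    have "K \<subseteq># mset xs" using Cons.prems False
      by (metis Diff_eq_empty_iff_mset minus_add_mset_if_not_in_lhs mset.simps(2))
    then obtain J' where J': "J' \<subseteq> {..<length xs}" "image_mset (\<lambda>i. xs!i) (mset_set J') = K"
      using Cons.IH by blast
    have fJ: "finite J'" using J'(1) finite_subset by blast
    have "Suc ` J' \<subseteq> {..<length (x#xs)}" using J'(1) by auto
    then show ?thesis using sh[OF fJ] J'(2) by blast
  qed
qed


lemma sum_mset_le_size:
  fixes g :: "'a \<Rightarrow> real"
  assumes "\<And>z. g z \<le> c"
  shows "sum_mset (image_mset g A) \<le> real (size A) * c"
  using assms by (induction A) (auto simp: algebra_simps add_mono)

lemma avg_upper:
  fixes g :: "'a \<Rightarrow> real" and U :: "nat \<Rightarrow> real" and xs :: "'a list"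
  assumes gb: "\<And>z. \<bar>g z\<bar> \<le> \<kappa>"
  and gU: "\<And>i. i < length xs \<Longrightarrow> g (xs!i) \<le> U i"
  and TT: "\<And>I. I \<subseteq> {..<length xs} \<Longrightarrow> card I = length xs - n \<Longrightarrow> sum U I \<le> T"
  and R: "R \<subseteq># mset xs" and Rs: "size R \<le> n" and As: "size A \<le> n" and nle: "n \<le> length xs"
  shows "sum_mset (image_mset g (mset xs - R + A)) / real (size (mset xs - R + A))
         \<le> (T + real n * \<kappa>) / real (length xs)"
proof -
  define b where "b = length xs"
  define r where "r = size R"
  define a where "a = size A"
  define k where "k = b - n"
  define h where "h = (\<lambda>i. g (xs!i))"
  have kap: "\<kappa> \<ge> 0" using gb[of undefined] by linarith
  have rle: "r \<le> b" using Rs nle r_def b_def by simp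
  have szB: "size (mset xs - R + A) = b - r + a"
    using size_Diff_submset[OF R] by (simp add: r_def a_def b_def)
  have T0: "T \<ge> 0" if "n = b"
    using TT[of "{}"] that by (simp add: b_def)
  obtain J where J: "J \<subseteq> {..<b}" "image_mset (\<lambda>i. xs!i) (mset_set J) = mset xs - R"
    using submset_indices[of "mset xs - R" xs] by (auto simp: b_def)
  have fJ: "finite J" using J(1) finite_subset by blast
  have cJ: "card J = b - r"
  proof -
    have "card J = size (image_mset (\<lambda>i. xs!i) (mset_set J))" by simp
    also have "\<dots> = b - r" using J(2) size_Diff_submset[OF R] by (simp add: r_def b_def)
    finally show ?thesis .
  qed
  define SA where "SA = sum_mset (image_mset g A)"
  have sumB: "sum_mset (image_mset g (mset xs - R + A)) = sum h J + SA"
  proof -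
    have "image_mset g (mset xs - R) = image_mset h (mset_set J)"
      using J(2)[symmetric] by (simp add: multiset.map_comp comp_def h_def)
    then show ?thesis by (simp add: SA_def sum_unfold_sum_mset)
  qed
  show ?thesis
  proof (cases "b - r + a = 0")
    case True
    then have "n = b" "r = b" using rle Rs r_def nle b_def by auto
    then show ?thesis using szB True T0 kap by (simp add: b_def[symmetric])
  next
    case False
    then have bpos: "b > 0" using As nle a_def b_def rle by linarith
    define S where "S = {I. I \<subseteq> J \<and> card I = k}"
    have fS: "finite S" 
      by (rule finite_subset[of S "Pow J"]) (use fJ in \<open>auto simp: S_def\<close>)
    have kJ: "k \<le> card J" using cJ Rs r_def k_def by simp
    obtain I0 where "I0 \<subseteq> J" "card I0 = k" using obtain_subset_with_card_n[OF kJ] by metis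
    then have neS: "S \<noteq> {}" unfolding S_def by blast
    obtain I where IS: "I \<in> S" and Imax: "\<And>I'. I' \<in> S \<Longrightarrow> sum h I' \<le> sum h I"
    proof -
      have "Max ((\<lambda>I. sum h I) ` S) \<in> (\<lambda>I. sum h I) ` S" using fS neS by (intro Max_in) auto
      then obtain I where "I \<in> S" "sum h I = Max ((\<lambda>I. sum h I) ` S)" by auto
      moreover have "\<And>I'. I' \<in> S \<Longrightarrow> sum h I' \<le> Max ((\<lambda>I. sum h I) ` S)" using fS by simp
      ultimately show ?thesis using that by metis
    qed
    have IJ: "I \<subseteq> J" and cI: "card I = k" using IS S_def by auto
    have fI: "finite I" using IJ fJ finite_subset by blast
    define D where "D = J - I"
    have cD: "card D = n - r" using card_Diff_subset[OF fI IJ] cJ cI k_def D_def Rs r_def nle b_def by simp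
    have exch: "h e \<le> h i" if e: "e \<in> D" and i: "i \<in> I" for e i
    proof (rule ccontr)
      assume "\<not> h e \<le> h i"
      define I' where "I' = insert e (I - {i})"
      have "e \<notin> I" using e D_def by auto
      have "card I > 0" using fI i card_gt_0_iff by blast
      have "card (I - {i}) = k - 1" using cI i fI by simp
      moreover have "e \<notin> I - {i}" using \<open>e \<notin> I\<close> by blast
      moreover have "finite (I - {i})" using fI by blast
      ultimately have "card I' = Suc (k - 1)" unfolding I'_def by simp
      then have "card I' = k" using \<open>card I > 0\<close> cI by simp
      moreover have "I' \<subseteq> J" using e D_def IJ unfolding I'_def by auto
      ultimately have "I' \<in> S" unfolding S_def by auto
      then have "sum h I' \<le> sum h I" by (rule Imax)
      moreover have "sum h I' = h e + (sum h I - h i)"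
        unfolding I'_def using \<open>e \<notin> I\<close> fI i by (simp add: sum_diff1)
      ultimately show False using \<open>\<not> h e \<le> h i\<close> by linarith
    qed
    define SI where "SI = sum h I"
    define SD where "SD = sum h D"
    have sJ: "sum h J = SI + SD" unfolding SI_def SD_def D_def
      using fJ IJ by (metis add.commute sum.subset_diff)
    have hk: "h i \<le> \<kappa>" for i using gb[of "xs!i"] h_def by auto
    have eD: "real b * h e \<le> SI + real n * \<kappa>" if "e \<in> D" for e
    proof -
      have "real k * h e \<le> SI" using sum_bounded_below[of I "h e" h] exch[OF that] cI SI_def by auto
      moreover have "real n * h e \<le> real n * \<kappa>" using hk by (simp add: mult_left_mono)
      moreover have "real b = real k + real n" using k_def nle b_def by simp
      ultimately show ?thesis by (simp add: algebra_simps)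
    qed
    have p1: "real b * SD \<le> real (n - r) * (SI + real n * \<kappa>)"
    proof -
      have "real b * SD = (\<Sum>e\<in>D. real b * h e)" by (simp add: SD_def sum_distrib_left)
      also have "\<dots> \<le> real (card D) * (SI + real n * \<kappa>)" using sum_bounded_above[of D "\<lambda>e. real b * h e"] eD by auto
      finally show ?thesis using cD by simp
    qed
    have SIk: "SI \<le> real k * \<kappa>" using sum_bounded_above[of I h \<kappa>] hk cI SI_def by auto
    have p2: "real (n - a) * SI \<le> real (n - a) * (real k * \<kappa>)" using SIk by (simp add: mult_left_mono)
    have SAa: "SA \<le> real a * \<kappa>" using sum_mset_le_size[of g \<kappa> A] gb a_def SA_def abs_le_D1 by blast
    have p3: "real b * SA \<le> real b * (real a * \<kappa>)" using SAa by (simp add: mult_left_mono)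
    have SIT: "SI \<le> T"
    proof -
      have "SI \<le> sum U I" unfolding SI_def h_def using IJ J(1) gU b_def by (intro sum_mono) auto
      also have "\<dots> \<le> T"
      proof (rule TT)
        show "I \<subseteq> {..<length xs}" using IJ J(1) b_def by blast
        show "card I = length xs - n" using cI k_def b_def by simp
      qed
      finally show ?thesis .
    qed
    define m where "m = b - r + a"
    have p4: "real m * (SI + real n * \<kappa>) \<le> real m * (T + real n * \<kappa>)" using SIT by (simp add: mult_left_mono)
    have nb: "b = k + n" using k_def nle b_def by simp
    have nm: "m = k + (n - r) + a" using m_def nb Rs r_def by simp
    have na: "n = (n - a) + a" using As a_def by simp
    define kk where "kk = real k"
    define aa where "aa = real a"
    define nn where "nn = real (n - a)"
    define dd where "dd = real (n - r)"
    have hb: "real b = kk + nn + aa" using nb na unfolding kk_def nn_def aa_def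
      by (metis of_nat_add add.assoc)
    have hn: "real n = nn + aa" using na unfolding nn_def aa_def by (metis of_nat_add)
    have hm: "real m = kk + dd + aa" using nm unfolding kk_def dd_def aa_def by (metis of_nat_add)
    have p1': "real b * SD \<le> dd * (SI + real n * \<kappa>)" using p1 dd_def by simp
    have p2': "nn * SI \<le> nn * (kk * \<kappa>)" using p2 nn_def kk_def by simp
    have p3': "real b * SA \<le> real b * (aa * \<kappa>)" using p3 aa_def by simp
    have key: "real b * (SI + SD + SA) \<le> real m * (T + real n * \<kappa>)"
    proof -
      have e1: "real b * (SI + SD + SA) = real b * SI + real b * SD + real b * SA"
        by (simp add: algebra_simps)
      have e2: "(kk + aa) * (SI + real n * \<kappa>) - (real b * SI + real b * (aa * \<kappa>))
               = nn * (kk * \<kappa>) - nn * SI"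
        unfolding hb hn by (simp add: algebra_simps)
      have e3: "real m * (SI + real n * \<kappa>) = dd * (SI + real n * \<kappa>) + (kk + aa) * (SI + real n * \<kappa>)"
        unfolding hm by (simp add: algebra_simps)
      have "real b * (SI + SD + SA) \<le> real m * (SI + real n * \<kappa>)"
        using e1 e2 e3 p1' p2' p3' by linarith
      also have "\<dots> \<le> real m * (T + real n * \<kappa>)" by (rule p4)
      finally show ?thesis .
    qed
    have "m > 0" using False m_def by linarith
    then have mpos: "real m > 0" by simp
    show ?thesis unfolding sumB szB using key mpos bpos sJ
      by (simp add: field_simps b_def[symmetric] m_def add.assoc)
  qed
qed


lemma sum_mset_vec_nth: "(sum_mset M) $ j = sum_mset (image_mset (\<lambda>v. v $ j) M)"
  by (induction M) auto

lemma sum_mset_neg: "sum_mset (image_mset (\<lambda>z. - (g z :: real)) M) = - sum_mset (image_mset g M)"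
  by (induction M) auto

lemma Clip_bound: "\<kappa> > 0 \<Longrightarrow> \<bar>Clip \<kappa> v $ j\<bar> \<le> \<kappa>"
  unfolding Clip_def by auto

theorem mainTheorem2:
  fixes f :: "'x \<Rightarrow> real^'d \<Rightarrow> real^'k"
    and L :: "real^'k \<Rightarrow> 'y \<Rightarrow> real"
    and \<kappa> :: real
    and thL thU :: "real^'d"
    and batch :: "('x \<times> 'y) list"
    and n :: nat
    and \<delta>L \<delta>U :: "nat \<Rightarrow> real^'d"
    and th :: "real^'d"
    and R A :: "('x \<times> 'y) multiset"
  assumes f_diff: "\<And>x \<theta>. f x differentiable (at \<theta>)"
    and L_diff: "\<And>y p. (\<lambda>q. L q y) differentiable (at p)"
    and kpos: "\<kappa> > 0"
    and n_le: "n \<le> length batch"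
    and bounds: "\<And>i \<theta>'. i < length batch \<Longrightarrow> \<theta>' \<in> interval_dom thL thU \<Longrightarrow>
        (\<forall>j. \<delta>L i $ j \<le> Clip \<kappa> (grad (\<lambda>\<theta>. L (f (fst (batch!i)) \<theta>) (snd (batch!i))) \<theta>') $ j
           \<and> Clip \<kappa> (grad (\<lambda>\<theta>. L (f (fst (batch!i)) \<theta>) (snd (batch!i))) \<theta>') $ j \<le> \<delta>U i $ j)"
    and th_in: "th \<in> interval_dom thL thU"
    and R_sub: "R \<subseteq># mset batch" and R_size: "size R \<le> n"
    and A_size: "size A \<le> n"
  shows "let b = length batch;
             Bt = mset batch - R + A;
             \<Delta> = (1 / real (size Bt)) *\<^sub>R
                   sum_mset (image_mset (\<lambda>(x, y). Clip \<kappa> (grad (\<lambda>\<theta>. L (f x \<theta>) y) th)) Bt);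
             \<Delta>L = (1 / real b) *\<^sub>R (SEMin (b - n) b \<delta>L - (real n * \<kappa>) *\<^sub>R (\<chi> j. 1));
             \<Delta>U = (1 / real b) *\<^sub>R (SEMax (b - n) b \<delta>U + (real n * \<kappa>) *\<^sub>R (\<chi> j. 1))
         in \<forall>j. \<Delta>L $ j \<le> \<Delta> $ j \<and> \<Delta> $ j \<le> \<Delta>U $ j"
proof -
  define b where "b = length batch"
  define Bt where "Bt = mset batch - R + A"
  define G where "G = (\<lambda>(x, y). Clip \<kappa> (grad (\<lambda>\<theta>. L (f x \<theta>) y) th))"
  have main: "(1 / real b) * (SEMin (b - n) b \<delta>L $ j - real n * \<kappa>)
        \<le> (1 / real (size Bt)) * sum_mset (image_mset (\<lambda>z. G z $ j) Bt)
      \<and> (1 / real (size Bt)) * sum_mset (image_mset (\<lambda>z. G z $ j) Bt)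
        \<le> (1 / real b) * (SEMax (b - n) b \<delta>U $ j + real n * \<kappa>)" for j
  proof -
    define g where "g = (\<lambda>z. G z $ j)"
    have gb: "\<bar>g z\<bar> \<le> \<kappa>" for z
      unfolding g_def G_def using Clip_bound[OF kpos] by (cases z) auto
    have gi: "\<delta>L i $ j \<le> g (batch!i) \<and> g (batch!i) \<le> \<delta>U i $ j" if "i < length batch" for i
    proof -
      have "g (batch!i) = Clip \<kappa> (grad (\<lambda>\<theta>. L (f (fst (batch!i)) \<theta>) (snd (batch!i))) th) $ j"
        unfolding g_def G_def by (simp add: case_prod_beta)
      then show ?thesis using bounds[OF that th_in] by simp
    qed
    have up: "sum_mset (image_mset g Bt) / real (size Bt) \<le> (SEMax (b - n) b \<delta>U $ j + real n * \<kappa>) / real b"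
      unfolding Bt_def b_def
    proof (rule avg_upper[OF gb])
      show "g (batch ! i) \<le> \<delta>U i $ j" if "i < length batch" for i using gi[OF that] by simp
      show "sum (\<lambda>i. \<delta>U i $ j) I \<le> SEMax (length batch - n) (length batch) \<delta>U $ j"
        if "I \<subseteq> {..<length batch}" "card I = length batch - n" for I
      proof -
        have "sum (\<lambda>i. \<delta>U i $ j) I = (\<Sum>i\<in>I. (map (\<lambda>i. \<delta>U i $ j) [0..<length batch]) ! i)"
          using that(1) by (intro sum.cong) auto
        also have "\<dots> \<le> SEMax (length batch - n) (length batch) \<delta>U $ j"
          unfolding SEMax_def using topk_le[of I _ "length batch - n"] that by simp
        finally show ?thesis .
      qed
    qed (use R_sub R_size A_size n_le in auto)
    have lo: "sum_mset (image_mset (\<lambda>z. - g z) Bt) / real (size Bt) \<le> (- (SEMin (b - n) b \<delta>L $ j) + real n * \<kappa>) / real b"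
      unfolding Bt_def b_def
    proof (rule avg_upper[where U = "\<lambda>i. - (\<delta>L i $ j)"])
      show "\<bar>- g z\<bar> \<le> \<kappa>" for z using gb[of z] by simp
      show "- g (batch ! i) \<le> - (\<delta>L i $ j)" if "i < length batch" for i using gi[OF that] by simp
      show "sum (\<lambda>i. - (\<delta>L i $ j)) I \<le> - (SEMin (length batch - n) (length batch) \<delta>L $ j)"
        if "I \<subseteq> {..<length batch}" "card I = length batch - n" for I
      proof -
        have "sum (\<lambda>i. \<delta>L i $ j) I = (\<Sum>i\<in>I. (map (\<lambda>i. \<delta>L i $ j) [0..<length batch]) ! i)"
          using that(1) by (intro sum.cong) auto
        moreover have "SEMin (length batch - n) (length batch) \<delta>L $ j \<le> (\<Sum>i\<in>I. (map (\<lambda>i. \<delta>L i $ j) [0..<length batch]) ! i)"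
          unfolding SEMin_def using botk_ge[of I _ "length batch - n"] that by simp
        ultimately show ?thesis by (simp add: sum_negf)
      qed
    qed (use R_sub R_size A_size n_le in auto)
    have lo': "(SEMin (b - n) b \<delta>L $ j - real n * \<kappa>) / real b \<le> sum_mset (image_mset g Bt) / real (size Bt)"
    proof -
      have e1: "(- (SEMin (b - n) b \<delta>L $ j) + real n * \<kappa>) / real b = - ((SEMin (b - n) b \<delta>L $ j - real n * \<kappa>) / real b)"
        by (simp add: add_divide_distrib diff_divide_distrib)
      have e2: "- sum_mset (image_mset g Bt) / real (size Bt) = - (sum_mset (image_mset g Bt) / real (size Bt))"
        by simp
      have "- (sum_mset (image_mset g Bt) / real (size Bt)) \<le> - ((SEMin (b - n) b \<delta>L $ j - real n * \<kappa>) / real b)"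
        using lo unfolding sum_mset_neg e1 e2 .
      then show ?thesis by linarith
    qed
    have q1: "\<And>Y. (1 / real b) * Y = Y / real b" by simp
    have q2: "\<And>Y. (1 / real (size Bt)) * Y = Y / real (size Bt)" by simp
    show ?thesis unfolding q1 q2 using up lo' unfolding g_def by blast
  qed
  have comp: "(sum_mset (image_mset G Bt)) $ j = sum_mset (image_mset (\<lambda>z. G z $ j) Bt)" for j
    by (simp add: sum_mset_vec_nth multiset.map_comp comp_def)
  show ?thesis
    unfolding Let_def b_def[symmetric] Bt_def[symmetric] G_def[symmetric]
  proof (intro allI)
    fix j
    show "((1 / real b) *\<^sub>R (SEMin (b - n) b \<delta>L - (real n * \<kappa>) *\<^sub>R (\<chi> j. 1))) $ j
            \<le> ((1 / real (size Bt)) *\<^sub>R sum_mset (image_mset G Bt)) $ j \<and>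
          ((1 / real (size Bt)) *\<^sub>R sum_mset (image_mset G Bt)) $ j
            \<le> ((1 / real b) *\<^sub>R (SEMax (b - n) b \<delta>U + (real n * \<kappa>) *\<^sub>R (\<chi> j. 1))) $ j"
      using main[of j] unfolding vector_scaleR_component comp vector_minus_component vector_add_component
      by simp
  qed
qed

end
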